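(* Consider an $m$-player episodic Markov game with finite state space $\mathcal{S}$ ($|\mathcal{S}|=S$), action sets $\mathcal{A}_1,\dots,\mathcal{A}_m$ with $|\mathcal{A}_j|=A_j$, and horizon $H$, and an offline dataset of size $n$ in which, for each $h\in[H]$, the state–joint-action pairs $(s_h^k,\mathbf{a}_h^k)$, $k=1,\dots,n$, are i.i.d. with law $d_h$, all dataset tuples being mutually independent. Let $p_{\min}=\min_{s,\mathbf{a},h}\{d_h(s,\mathbf{a}):d_h(s,\mathbf{a})>0\}$ and $\delta\in(0,1)$. If $n\geq \frac{8\log(S\prod_{j\in[m]}A_jH/\delta)}{p_{\min}}$, then with probability at least $1-\delta$, for every joint strategy $\pi$ we have $2C(\pi)\geq \widehat{C}(\pi)$.
   Context: A (Markov) joint strategy is $\pi=(\pi_1,\dots,\pi_m)$ with $\pi_{h,j}:\mathcal{S}\to\Delta(\mathcal{A}_j)$; players act independently. From a fixed initial state $s_1$, $d_h^{\pi}(s,\mathbf{a})$ denotes the probability that $(s_h,\mathbf{a}_h)=(s,\mathbf{a})$ under $\pi$. For a strategy $\pi'$ and player $j$, $(\pi'_j,\pi_{-j})$ denotes the joint strategy where player $j$ uses $\pi'_j$ and all others use $\pi$. Let $n_h(s,\mathbf{a})$ be the number of $k$ with $(s_h^k,\mathbf{a}_h^k)=(s,\mathbf{a})$ and $\widehat{d}_h(s,\mathbf{a})=n_h(s,\mathbf{a})/n$. The population unilateral coefficient is $C(\pi)=\max_{h,j,\pi',s,\mathbf{a}} d_h^{\pi'_j,\pi_{-j}}(s,\mathbf{a})/d_h(s,\mathbf{a})$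 and the empirical unilateral coefficient is $\widehat{C}(\pi)=\max_{h,j,\pi',s,\mathbf{a}} d_h^{\pi'_j,\pi_{-j}}(s,\mathbf{a})/\widehat{d}_h(s,\mathbf{a})$ (maxima over $h\in[H]$, $j\in[m]$, all strategies $\pi'$, $s\in\mathcal{S}$, joint actions $\mathbf{a}$; with conventions $0/0=0$ and $x/0=+\infty$ for $x>0$). *)

theory Defs
  imports "HOL-Probability.Probability"
begin

text \<open>Markov game: players are 0..<m, player j has action set A j (subset of a common
type 'a). A (Markov) joint strategy is
sg h j s :: 'a pmf (player j's mixed action at step h in state s); players act independently.
Transition kernel P h s a :: 's pmf; initial state s1. Steps are h = 1..H.\<close>

type_synonym ('s,'a) strategy = "nat \<Rightarrow> nat \<Rightarrow> 's \<Rightarrow> 'a pmf"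

definition valid_strategy :: "nat \<Rightarrow> (nat \<Rightarrow> 'a set) \<Rightarrow> ('s,'a) strategy \<Rightarrow> bool" where
  "valid_strategy m A sg \<longleftrightarrow> (\<forall>h j s. j < m \<longrightarrow> set_pmf (sg h j s) \<subseteq> A j)"

definition joint_action :: "nat \<Rightarrow> ('s,'a) strategy \<Rightarrow> nat \<Rightarrow> 's \<Rightarrow> (nat \<Rightarrow> 'a) pmf" where
  "joint_action m sg h s = Pi_pmf {..<m} undefined (\<lambda>j. sg h j s)"

definition deviate :: "nat \<Rightarrow> ('s,'a) strategy \<Rightarrow> ('s,'a) strategy \<Rightarrow> ('s,'a) strategy" where
  "deviate j sg' sg = (\<lambda>h i s. if i = j then sg' h i s else sg h i s)"

text \<open>state_occ ... h : law of s_h (h \<ge> 1); sa_occ ... h : law of (s_h, a_h).\<close>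
fun state_occ :: "nat \<Rightarrow> (nat \<Rightarrow> 's \<Rightarrow> (nat \<Rightarrow> 'a) \<Rightarrow> 's pmf) \<Rightarrow> 's \<Rightarrow> ('s,'a) strategy
      \<Rightarrow> nat \<Rightarrow> 's pmf" where
  "state_occ m P s1 sg 0 = return_pmf s1"
| "state_occ m P s1 sg (Suc 0) = return_pmf s1"
| "state_occ m P s1 sg (Suc (Suc h)) =
     bind_pmf (state_occ m P s1 sg (Suc h))
       (\<lambda>s. bind_pmf (joint_action m sg (Suc h) s) (\<lambda>a. P (Suc h) s a))"

definition sa_occ :: "nat \<Rightarrow> (nat \<Rightarrow> 's \<Rightarrow> (nat \<Rightarrow> 'a) \<Rightarrow> 's pmf) \<Rightarrow> 's \<Rightarrow> ('s,'a) strategy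
      \<Rightarrow> nat \<Rightarrow> ('s \<times> (nat \<Rightarrow> 'a)) pmf" where
  "sa_occ m P s1 sg h =
     bind_pmf (state_occ m P s1 sg h) (\<lambda>s. map_pmf (\<lambda>a. (s, a)) (joint_action m sg h s))"

definition ratio :: "real \<Rightarrow> real \<Rightarrow> ereal" where
  "ratio x y = (if y = 0 then (if x = 0 then 0 else \<infinity>) else ereal (x / y))"

definition unilateral_coeff ::
  "nat \<Rightarrow> (nat \<Rightarrow> 'a set) \<Rightarrow> nat \<Rightarrow> (nat \<Rightarrow> 's \<Rightarrow> (nat \<Rightarrow> 'a) \<Rightarrow> 's pmf) \<Rightarrow> 's
   \<Rightarrow> (nat \<Rightarrow> 's \<times> (nat \<Rightarrow> 'a) \<Rightarrow> real) \<Rightarrow> ('s,'a) strategy \<Rightarrow> ereal" where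
  "unilateral_coeff m A H P s1 dref sg =
     (SUP x \<in> {(h, j, sg', s, a). h \<in> {1..H} \<and> j < m \<and> valid_strategy m A sg'
                                  \<and> a \<in> PiE {..<m} A}.
        case x of (h, j, sg', s, a) \<Rightarrow>
          ratio (pmf (sa_occ m P s1 (deviate j sg' sg) h) (s, a)) (dref h (s, a)))"

definition pop_coeff where
  "pop_coeff m A H P s1 (d :: nat \<Rightarrow> ('s \<times> (nat \<Rightarrow> 'a)) pmf) sg =
     unilateral_coeff m A H P s1 (\<lambda>h x. pmf (d h) x) sg"

text \<open>Dataset D (h,k) = (s_h^k, a_h^k), h \<in> [H], k \<in> [n].  Empirical count and distribution.\<close>
definition count_sa :: "nat \<Rightarrow> (nat \<times> nat \<Rightarrow> 's \<times> (nat \<Rightarrow> 'a)) \<Rightarrow> nat \<Rightarrow> 's \<times> (nat \<Rightarrow> 'a) \<Rightarrow> nat" where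
  "count_sa n D h x = card {k \<in> {1..n}. D (h, k) = x}"

definition emp_dist :: "nat \<Rightarrow> (nat \<times> nat \<Rightarrow> 's \<times> (nat \<Rightarrow> 'a)) \<Rightarrow> nat \<Rightarrow> 's \<times> (nat \<Rightarrow> 'a) \<Rightarrow> real" where
  "emp_dist n D h x = real (count_sa n D h x) / real n"

definition emp_coeff where
  "emp_coeff m A H P s1 n (D :: nat \<times> nat \<Rightarrow> 's \<times> (nat \<Rightarrow> 'a)) sg =
     unilateral_coeff m A H P s1 (emp_dist n D) sg"

definition dataset_law :: "nat \<Rightarrow> nat \<Rightarrow> (nat \<Rightarrow> ('s \<times> (nat \<Rightarrow> 'a)) pmf)
     \<Rightarrow> (nat \<times> nat \<Rightarrow> 's \<times> (nat \<Rightarrow> 'a)) pmf" where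
  "dataset_law H n d = Pi_pmf ({1..H} \<times> {1..n}) undefined (\<lambda>(h, k). d h)"

definition p_min :: "nat \<Rightarrow> (nat \<Rightarrow> ('s \<times> (nat \<Rightarrow> 'a)) pmf) \<Rightarrow> real" where
  "p_min H d = Min {pmf (d h) x | h x. h \<in> {1..H} \<and> pmf (d h) x > 0}"

end

theory Submission
  imports Defs
begin
lemma ln2_le: "ln (2::real) \<le> 3/4"
proof -
  have "1 + 3/4 + (3/4)\<^sup>2/2 \<le> exp (3/4::real)" by (rule exp_lower_Taylor_quadratic) simp
  hence "2 \<le> exp (3/4::real)" by (simp add: power2_eq_square)
  thus ?thesis by (metis ln_exp ln_le_cancel_iff exp_gt_zero zero_less_numeral)
qed

lemma tail:
  fixes q :: "'i \<Rightarrow> 'b pmf"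
  assumes J: "finite J" and Js: "Js \<subseteq> J" and q: "\<And>j. j\<in>Js \<Longrightarrow> q j = r"
  shows "measure_pmf.prob (Pi_pmf J dflt q) {D. real (card {j\<in>Js. D j = x}) < real (card Js) * pmf r x / 2}
          \<le> exp (- real (card Js) * pmf r x / 8)"
proof -
  define p where "p = pmf r x"
  define N where "N = card Js"
  define f where "f = (\<lambda>j y. if j \<in> Js \<and> y = x then 1/2 else (1::real))"
  define g where "g = (\<lambda>D. \<Prod>j\<in>J. f j (D j))"
  define Q where "Q = Pi_pmf J dflt q"
  have p01: "0 \<le> p" "p \<le> 1" by (auto simp: p_def pmf_le_1)
  have fJs: "finite Js" using J Js finite_subset by blast
  have g_eq: "g D = (1/2) ^ card {j\<in>Js. D j = x}" for D
  proof -
    have "g D = (\<Prod>j\<in>J. if j \<in> {j\<in>Js. D j = x} then 1/2 else 1)"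
      unfolding g_def f_def by (intro prod.cong) auto
    also have "\<dots> = (1/2) ^ card (J \<inter> {j\<in>Js. D j = x})"
      by (subst prod.If_cases[OF J]) simp
    also have "J \<inter> {j\<in>Js. D j = x} = {j\<in>Js. D j = x}" using Js by auto
    finally show ?thesis .
  qed
  have fint: "integrable (measure_pmf (q j)) (f j)" for j
    by (rule measure_pmf.integrable_const_bound[where B=1]) (auto simp: f_def)
  have Ef: "measure_pmf.expectation (q j) (f j) = (if j \<in> Js then 1 - p/2 else 1)" for j
  proof (cases "j \<in> Js")
    case True
    have "f j = (\<lambda>y. 1 - (1/2) * indicator {x} y)" using True by (auto simp: f_def fun_eq_iff)
    hence "measure_pmf.expectation (q j) (f j) = measure_pmf.expectation (q j) (\<lambda>_. 1) - measure_pmf.expectation (q j) (\<lambda>y. (1/2) * indicator {x} y)"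
      by (simp only:) (rule Bochner_Integration.integral_diff; intro measure_pmf.integrable_const_bound[where B=1]; simp add: indicator_def)
    hence "measure_pmf.expectation (q j) (f j) = 1 - (1/2) * measure_pmf.prob (q j) {x}"
      by simp
    thus ?thesis using True q by (simp add: p_def measure_pmf_single)
  next
    case False thus ?thesis by (simp add: f_def)
  qed
  have Eg: "measure_pmf.expectation Q g = (1 - p/2) ^ N"
  proof -
    have "measure_pmf.expectation Q g = (\<Prod>j\<in>J. measure_pmf.expectation (q j) (f j))"
      unfolding Q_def g_def by (rule expectation_prod_Pi_pmf[OF J fint]) (auto simp: f_def)
    also have "\<dots> = (\<Prod>j\<in>J. if j \<in> Js then 1 - p/2 else 1)" by (simp add: Ef)
    also have "\<dots> = (1 - p/2) ^ card (J \<inter> {j. j \<in> Js})"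
      by (subst prod.If_cases[OF J]) simp
    also have "J \<inter> {j. j \<in> Js} = Js" using Js by auto
    finally show ?thesis by (simp add: N_def)
  qed
  have gint: "integrable (measure_pmf Q) g"
    unfolding g_def Q_def by (rule integrable_prod_Pi_pmf[OF J fint])
  define c where "c = (1/2::real) powr (N * p / 2)"
  have c0: "c > 0" by (simp add: c_def)
  have sub: "{D. real (card {j\<in>Js. D j = x}) < real N * p / 2} \<subseteq> {D \<in> space (measure_pmf Q). g D \<ge> c}"
  proof safe
    fix D assume a: "real (card {j\<in>Js. D j = x}) < real N * p / 2"
    have "c \<le> (1/2) powr real (card {j\<in>Js. D j = x})"
      unfolding c_def using a by (intro powr_mono') auto
    also have "\<dots> = g D" by (simp add: g_eq powr_realpow)
    finally show "c \<le> g D" .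
  qed simp
  have "measure_pmf.prob Q {D. real (card {j\<in>Js. D j = x}) < real N * p / 2}
        \<le> measure_pmf.prob Q {D \<in> space (measure_pmf Q). g D \<ge> c}"
    by (rule measure_pmf.finite_measure_mono[OF sub]) simp
  also have "\<dots> \<le> measure_pmf.expectation Q g / c"
    by (rule integral_Markov_inequality_measure[OF gint _ _ c0]) (auto simp: g_eq)
  also have "\<dots> = (1 - p/2) ^ N * 2 powr (N * p / 2)"
    by (simp add: Eg c_def powr_divide)
  also have "\<dots> \<le> exp (- N * p / 8)"
  proof -
    have "(1 - p/2) ^ N \<le> exp (-p/2) ^ N"
      using p01 by (intro power_mono) (use exp_ge_add_one_self[of "-p/2"] in auto)
    also have "\<dots> = exp (- N * p / 2)" by (simp flip: exp_of_nat_mult)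
    finally have 1: "(1 - p/2) ^ N \<le> exp (- N * p / 2)" .
    have 2: "2 powr (N * p / 2) = exp (ln 2 * (N * p / 2))" by (simp add: powr_def)
    have "(1 - p/2) ^ N * 2 powr (N * p / 2) \<le> exp (- N * p / 2) * exp (ln 2 * (N * p / 2))"
      using 1 by (simp add: 2)
    also have "\<dots> = exp (- N * p / 2 + ln 2 * (N * p / 2))" by (simp only: exp_add)
    also have "\<dots> \<le> exp (- N * p / 8)"
    proof -
      have "ln 2 * (N * p / 2) \<le> 3/4 * (N * p / 2)"
        using ln2_le p01 by (intro mult_right_mono) auto
      hence "- N * p / 2 + ln 2 * (N * p / 2) \<le> - N * p / 8" by (simp add: algebra_simps)
      thus ?thesis by simp
    qed
    finally show ?thesis .
  qed
  finally show ?thesis by (simp add: Q_def N_def p_def)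
qed
lemma ratio_le:
  assumes "0 \<le> u" "0 \<le> e" "0 \<le> p" "p > 0 \<Longrightarrow> e \<ge> p / 2"
  shows "ratio u e \<le> 2 * ratio u p"
proof (cases "p = 0")
  case True
  then show ?thesis using assms by (cases "u = 0") (auto simp: ratio_def)
next
  case False
  hence pp: "p > 0" using assms by auto
  hence ee: "e \<ge> p/2" "e > 0" using assms by auto
  have "u / e \<le> u / (p/2)" using ee pp assms(1) by (intro divide_left_mono) auto
  also have "\<dots> = 2 * (u / p)" by simp
  finally have "ereal (u / e) \<le> 2 * ereal (u / p)" by simp
  thus ?thesis using pp ee by (simp add: ratio_def)
qed

lemma coeff_le:
  fixes P :: "nat \<Rightarrow> 's \<Rightarrow> (nat \<Rightarrow> 'a) \<Rightarrow> 's pmf" and sg :: "('s,'a) strategy"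
    and d :: "nat \<Rightarrow> ('s \<times> (nat \<Rightarrow> 'a)) pmf" and D :: "nat \<times> nat \<Rightarrow> 's \<times> (nat \<Rightarrow> 'a)"
  assumes "\<And>h x. h \<in> {1..H} \<Longrightarrow> pmf (d h) x > 0 \<Longrightarrow> emp_dist n D h x \<ge> pmf (d h) x / 2"
  shows "2 * pop_coeff m A H P s1 d sg \<ge> emp_coeff m A H P s1 n D sg"
  unfolding pop_coeff_def emp_coeff_def unilateral_coeff_def
proof (rule SUP_least)
  fix y :: "nat \<times> nat \<times> ('s,'a) strategy \<times> 's \<times> (nat \<Rightarrow> 'a)" assume y: "y \<in> {(h, j, sg', s, a). h \<in> {1..H} \<and> j < m \<and> valid_strategy m A sg' \<and> a \<in> PiE {..<m} A}"
  obtain h j and sg' :: "('s,'a) strategy" and s a where yy: "y = (h, j, sg', s, a)" by (cases y) auto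
  let ?S = "{(h, j, sg', s, a). h \<in> {1..H} \<and> j < m \<and> valid_strategy m A sg' \<and> a \<in> PiE {..<m} A}"
  let ?F = "\<lambda>x. case x of (h, j, sg', s, a) \<Rightarrow> ratio (pmf (sa_occ m P s1 (deviate j sg' sg) h) (s, a)) (pmf (d h) (s, a))"
  have h: "h \<in> {1..H}" using y yy by auto
  have "ratio (pmf (sa_occ m P s1 (deviate j sg' sg) h) (s, a)) (emp_dist n D h (s, a))
        \<le> 2 * ratio (pmf (sa_occ m P s1 (deviate j sg' sg) h) (s, a)) (pmf (d h) (s, a))"
    by (rule ratio_le[OF _ _ _ assms[OF h]]) (auto simp: emp_dist_def)
  also have "\<dots> \<le> 2 * (SUP x\<in>?S. ?F x)"
    by (intro ereal_mult_left_mono SUP_upper2[OF y]) (auto simp: yy)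
  finally show "(case y of (h, j, sg', s, a) \<Rightarrow> ratio (pmf (sa_occ m P s1 (deviate j sg' sg) h) (s, a)) (emp_dist n D h (s, a)))
        \<le> 2 * (SUP x\<in>?S. ?F x)" by (simp add: yy)
qed

theorem proposition1:
  fixes m H n :: nat
    and A :: "nat \<Rightarrow> 'a set"
    and P :: "nat \<Rightarrow> 's::finite \<Rightarrow> (nat \<Rightarrow> 'a) \<Rightarrow> 's pmf"
    and s1 :: 's
    and d :: "nat \<Rightarrow> ('s \<times> (nat \<Rightarrow> 'a)) pmf"
    and \<delta> :: real
  assumes "m \<ge> 1" and "H \<ge> 1"
    and "\<And>j. j < m \<Longrightarrow> finite (A j) \<and> A j \<noteq> {}"
    and "\<And>h. h \<in> {1..H} \<Longrightarrow> set_pmf (d h) \<subseteq> UNIV \<times> PiE {..<m} A"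
    and "0 < \<delta>" and "\<delta> < 1"
    and "real n \<ge> 8 * ln (real (card (UNIV :: 's set)) * (\<Prod>j<m. real (card (A j))) * real H / \<delta>)
                   / p_min H d"
  shows "measure_pmf.prob (dataset_law H n d)
           {D. \<forall>sg. valid_strategy m A sg \<longrightarrow>
                 2 * pop_coeff m A H P s1 d sg \<ge> emp_coeff m A H P s1 n D sg}
         \<ge> 1 - \<delta>"
proof -
  note a = assms
  define K :: real where "K = real (card (UNIV :: 's set)) * (\<Prod>j<m. real (card (A j))) * real H"
  define X where "X = (UNIV :: 's set) \<times> PiE {..<m} A"
  have finA: "finite (A j)" if "j < m" for j using a(3)[OF that] by blast
  have finX: "finite X" unfolding X_def using finA by (intro finite_cartesian_product finite_PiE) auto
  have cardX: "real (card X) * real H = K"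
    unfolding X_def K_def using finA
    by (simp add: card_cartesian_product card_PiE of_nat_prod)
  have S1: "card (UNIV :: 's set) \<ge> 1" using finite_UNIV card_gt_0_iff by fastforce
  have Aj1: "real (card (A j)) \<ge> 1" if "j < m" for j
  proof -
    have "card (A j) > 0" using a(3)[OF that] card_gt_0_iff by blast
    thus ?thesis by simp
  qed
  have K1: "K \<ge> 1"
  proof -
    have "(\<Prod>j<m. real (card (A j))) \<ge> 1" using Aj1 by (intro prod_ge_1) auto
    moreover have "real (card (UNIV :: 's set)) \<ge> 1" "real H \<ge> 1" using S1 a(2) by auto
    ultimately have "1 * 1 \<le> real (card (UNIV :: 's set)) * (\<Prod>j<m. real (card (A j)))"
      by (intro mult_mono) auto
    hence "1 * 1 \<le> real (card (UNIV :: 's set)) * (\<Prod>j<m. real (card (A j))) * real H"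
      using \<open>real H \<ge> 1\<close> by (intro mult_mono) auto
    thus ?thesis unfolding K_def by simp
  qed
  define I where "I = {(h, x). h \<in> {1..H} \<and> x \<in> set_pmf (d h)}"
  have IX: "I \<subseteq> {1..H} \<times> X" unfolding I_def X_def using a(4) by auto
  have finI: "finite I" using IX finX finite_subset by blast
  have cardI: "real (card I) \<le> K"
  proof -
    have "card I \<le> card ({1..H} \<times> X)" using IX finX by (intro card_mono) auto
    also have "\<dots> = H * card X" by (simp add: card_cartesian_product)
    finally show ?thesis using cardX
      by (metis (mono_tags, lifting) mult.commute of_nat_le_iff of_nat_mult)
  qed
  define pm where "pm = p_min H d"
  have pmset: "{pmf (d h) x | h x. h \<in> {1..H} \<and> pmf (d h) x > 0} = (\<lambda>(h, x). pmf (d h) x) ` I"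
    unfolding I_def by (auto simp: set_pmf_iff image_iff) (metis pmf_nonneg order_le_neq_trans)
  have Ine: "I \<noteq> {}"
  proof -
    obtain x where "x \<in> set_pmf (d 1)" using set_pmf_not_empty by fast
    thus ?thesis unfolding I_def using a(2) by auto
  qed
  have pm_le: "pm \<le> pmf (d h) x" if "(h, x) \<in> I" for h x
    unfolding pm_def p_min_def pmset using that finI by (intro Min_le) auto
  have pm_pos: "pm > 0"
    unfolding pm_def p_min_def pmset using finI Ine
    by (subst Min_gr_iff) (auto simp: I_def set_pmf_iff)
  have lnpos: "ln (K / \<delta>) > 0"
    using K1 a(5,6) by (intro ln_gt_zero) (simp add: field_simps)
  have npm: "real n * pm \<ge> 8 * ln (K / \<delta>)"
    using a(7) pm_pos unfolding K_def pm_def by (simp add: pos_divide_le_eq)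
  have npos: "n > 0" using npm lnpos pm_pos by (cases n) auto
  have expb: "exp (- real n * pm / 8) \<le> \<delta> / K"
  proof -
    have "exp (- real n * pm / 8) \<le> exp (- ln (K / \<delta>))" using npm by simp
    also have "\<dots> = \<delta> / K" using K1 a(5) by (simp add: exp_minus exp_ln)
    finally show ?thesis .
  qed
  define Bad where "Bad = (\<lambda>(h, x). {D. real (count_sa n D h x) < real n * pmf (d h) x / 2})"
  have probBad: "measure_pmf.prob (dataset_law H n d) (Bad i) \<le> \<delta> / K" if i: "i \<in> I" for i
  proof -
    obtain h x where hx: "i = (h, x)" by (cases i)
    have h: "h \<in> {1..H}" using i hx I_def by auto
    have cnt: "count_sa n D h x = card {j \<in> {h} \<times> {1..n}. D j = x}" for D :: "nat \<times> nat \<Rightarrow> 's \<times> (nat \<Rightarrow> 'a)"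
    proof -
      have "{j \<in> {h} \<times> {1..n}. D j = x} = (\<lambda>k. (h, k)) ` {k \<in> {1..n}. D (h, k) = x}" by auto
      thus ?thesis unfolding count_sa_def by (simp add: card_image inj_on_def)
    qed
    have cn: "card ({h} \<times> {1..n}) = n" by (simp add: card_cartesian_product)
    have "measure_pmf.prob (dataset_law H n d) (Bad i)
          = measure_pmf.prob (Pi_pmf ({1..H} \<times> {1..n}) undefined (\<lambda>(h, k). d h))
             {D. real (card {j \<in> {h} \<times> {1..n}. D j = x}) < real (card ({h} \<times> {1..n})) * pmf (d h) x / 2}"
      unfolding dataset_law_def Bad_def hx by (simp add: cnt cn)
    also have "\<dots> \<le> exp (- real (card ({h} \<times> {1..n})) * pmf (d h) x / 8)"
      by (rule tail) (use h in auto)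
    also have "\<dots> \<le> exp (- real n * pm / 8)"
      using pm_le[of h x] i hx by (simp add: cn mult_left_mono)
    also have "\<dots> \<le> \<delta> / K" by (rule expb)
    finally show ?thesis .
  qed
  have sub: "UNIV - (\<Union>i\<in>I. Bad i) \<subseteq> {D. \<forall>sg. valid_strategy m A sg \<longrightarrow>
                 2 * pop_coeff m A H P s1 d sg \<ge> emp_coeff m A H P s1 n D sg}"
  proof (safe)
    fix D sg assume D: "D \<in> UNIV" "D \<notin> (\<Union>i\<in>I. Bad i)"
    show "2 * pop_coeff m A H P s1 d sg \<ge> emp_coeff m A H P s1 n D sg"
    proof (rule coeff_le)
      fix h x assume h: "h \<in> {1..H}" and px: "pmf (d h) x > 0"
      hence "(h, x) \<in> I" unfolding I_def by (auto simp: set_pmf_iff)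
      hence "\<not> real (count_sa n D h x) < real n * pmf (d h) x / 2" using D unfolding Bad_def by auto
      thus "emp_dist n D h x \<ge> pmf (d h) x / 2"
        unfolding emp_dist_def using npos by (simp add: field_simps)
    qed
  qed
  have "measure_pmf.prob (dataset_law H n d) (\<Union>i\<in>I. Bad i) \<le> (\<Sum>i\<in>I. measure_pmf.prob (dataset_law H n d) (Bad i))"
    by (rule measure_pmf.finite_measure_subadditive_finite) (use finI in auto)
  also have "\<dots> \<le> (\<Sum>i\<in>I. \<delta> / K)" by (intro sum_mono probBad)
  also have "\<dots> = real (card I) * (\<delta> / K)" by simp
  also have "\<dots> \<le> K * (\<delta> / K)" using cardI a(5) K1 by (intro mult_right_mono) auto
  also have "\<dots> = \<delta>" using K1 by simp
  finally have U: "measure_pmf.prob (dataset_law H n d) (\<Union>i\<in>I. Bad i) \<le> \<delta>" .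
  have "1 - \<delta> \<le> measure_pmf.prob (dataset_law H n d) (UNIV - (\<Union>i\<in>I. Bad i))"
    using U by (subst measure_pmf.prob_compl[simplified]) auto
  also have "\<dots> \<le> measure_pmf.prob (dataset_law H n d) {D. \<forall>sg. valid_strategy m A sg \<longrightarrow>
                 2 * pop_coeff m A H P s1 d sg \<ge> emp_coeff m A H P s1 n D sg}"
    by (rule measure_pmf.finite_measure_mono[OF sub]) simp
  finally show ?thesis .
qed

end
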